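(* Let $\mathcal{F}$ be a space of functions on $\mathbb{R}$, closed under translations, with a translation-invariant norm $\|\cdot\|$. Suppose that $S_N$ admits the weak global Edgeworth expansion of order $0$ on $\mathcal{F}$ with leading polynomial $P_{0,g}\equiv 1$ and asymptotic mean $A=0$, i.e. $\mathbb{E}(g(S_N))=\int\mathfrak{n}(z)g(z\sqrt{N})\,dz+\|g\|\,o(N^{-1/2})$ for all $g\in\mathcal{F}$, with the $o$-term independent of $g$. Let $f\in\mathcal{F}$ be integrable with $|xf(x)|$ integrable. Then $$\sqrt{N}\,\mathbb{E}(f(S_N-u))=\frac{1}{\sqrt{2\pi\sigma^2}}e^{-\frac{u^2}{2N\sigma^2}}\int f(x)\,dx+o(1)$$ uniformly for $u\in\mathbb{R}$.
   Context: $X_1,X_2,\dots$ are real random variables, $S_N=\sum_{n=1}^N X_n$, $\sigma^2>0$ and $\mathfrak{n}(y)=\frac{1}{\sqrt{2\pi\sigma^2}}e^{-y^2/(2\sigma^2)}$. In this subsection the paper assumes the asymptotic mean $A=\lim_{N\to\infty}\mathbb{E}(S_N/N)$ equals $0$. *)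

theory Defs
  imports "HOL-Probability.Probability"
begin

definition ndens :: "real \<Rightarrow> real \<Rightarrow> real" where
  "ndens \<sigma> y = 1 / sqrt (2 * pi * \<sigma>\<^sup>2) * exp (- y\<^sup>2 / (2 * \<sigma>\<^sup>2))"

definition psum :: "(nat \<Rightarrow> 'a \<Rightarrow> real) \<Rightarrow> nat \<Rightarrow> 'a \<Rightarrow> real" where
  "psum X N \<omega> = (\<Sum>n = 1..N. X n \<omega>)"

end

theory Submission
  imports Defs
begin

lemma ndens_deriv_bound:
  assumes s: "(\<sigma>::real) > 0"
  shows "\<bar>ndens \<sigma> y * (- y / \<sigma>\<^sup>2)\<bar> \<le> 1 / sqrt (2 * pi * \<sigma>\<^sup>2) / \<sigma>"
proof -
  define c where "c = 1 / sqrt (2 * pi * \<sigma>\<^sup>2)"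
  define t where "t = y\<^sup>2 / (2 * \<sigma>\<^sup>2)"
  have c0: "c > 0" using s by (simp add: c_def)
  have "\<bar>y\<bar> \<le> \<sigma> * (1 + t)"
  proof -
    have h1: "2 * \<sigma> * \<bar>y\<bar> \<le> \<sigma>\<^sup>2 + y\<^sup>2"
      using sum_squares_bound[of \<sigma> "\<bar>y\<bar>"] by (simp add: power2_eq_square)
    have h2: "\<sigma> * (1 + t) = (2 * \<sigma>\<^sup>2 + y\<^sup>2) / (2 * \<sigma>)"
      using s unfolding t_def by (simp add: field_simps power2_eq_square)
    have h3: "\<bar>y\<bar> * (2 * \<sigma>) \<le> 2 * \<sigma>\<^sup>2 + y\<^sup>2"
    proof -
      have p: "0 \<le> \<sigma>\<^sup>2" by simp
      have e: "\<bar>y\<bar> * (2 * \<sigma>) = 2 * \<sigma> * \<bar>y\<bar>" by (simp add: algebra_simps)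
      show ?thesis using h1 p e by linarith
    qed
    have "\<bar>y\<bar> \<le> (2 * \<sigma>\<^sup>2 + y\<^sup>2) / (2 * \<sigma>)"
      using s h3 by (simp add: pos_le_divide_eq)
    thus ?thesis using h2 by simp
  qed
  also have "\<dots> \<le> \<sigma> * exp t" using s exp_ge_add_one_self[of t]
    by (intro mult_left_mono) auto
  finally have yb: "\<bar>y\<bar> \<le> \<sigma> * exp t" .
  have "\<bar>ndens \<sigma> y * (- y / \<sigma>\<^sup>2)\<bar> = c * exp (- t) * \<bar>y\<bar> / \<sigma>\<^sup>2"
    unfolding ndens_def c_def t_def using s by (simp add: abs_mult abs_divide)
  also have "\<dots> \<le> c * exp (- t) * (\<sigma> * exp t) / \<sigma>\<^sup>2"
    using yb c0 s by (intro divide_right_mono mult_left_mono) auto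
  also have "\<dots> = c / \<sigma>" using s by (simp add: exp_minus field_simps power2_eq_square)
  finally show ?thesis unfolding c_def .
qed

lemma ndens_deriv: "(\<sigma>::real) \<noteq> 0 \<Longrightarrow> (ndens \<sigma> has_real_derivative ndens \<sigma> y * (- y / \<sigma>\<^sup>2)) (at y)"
  unfolding ndens_def
  by (auto intro!: derivative_eq_intros simp: field_simps power2_eq_square)

lemma ndens_lip:
  assumes s: "(\<sigma>::real) > 0"
  shows "\<bar>ndens \<sigma> a - ndens \<sigma> b\<bar> \<le> 1 / sqrt (2 * pi * \<sigma>\<^sup>2) / \<sigma> * \<bar>a - b\<bar>"
proof -
  have main: "\<bar>ndens \<sigma> a - ndens \<sigma> b\<bar> \<le> 1 / sqrt (2 * pi * \<sigma>\<^sup>2) / \<sigma> * \<bar>a - b\<bar>" if ab: "a < b" for a b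
  proof -
    obtain z where "ndens \<sigma> b - ndens \<sigma> a = (b - a) * (ndens \<sigma> z * (- z / \<sigma>\<^sup>2))"
      using MVT2[OF ab, of "ndens \<sigma>" "\<lambda>y. ndens \<sigma> y * (- y / \<sigma>\<^sup>2)"] ndens_deriv s by force
    note eq = this
    have "\<bar>ndens \<sigma> a - ndens \<sigma> b\<bar> = \<bar>ndens \<sigma> b - ndens \<sigma> a\<bar>" by (rule abs_minus_commute)
    also have "\<dots> = \<bar>(b - a) * (ndens \<sigma> z * (- z / \<sigma>\<^sup>2))\<bar>" by (simp only: eq)
    also have "\<dots> = \<bar>b - a\<bar> * \<bar>ndens \<sigma> z * (- z / \<sigma>\<^sup>2)\<bar>" by (rule abs_mult)
    also have "\<dots> \<le> \<bar>b - a\<bar> * (1 / sqrt (2 * pi * \<sigma>\<^sup>2) / \<sigma>)"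
      by (intro mult_left_mono ndens_deriv_bound s) auto
    finally show ?thesis by (simp add: abs_minus_commute mult.commute)
  qed
  show ?thesis
    using main[of a b] main[of b a] by (cases a b rule: linorder_cases) (auto simp: abs_minus_commute)
qed

theorem proposition5p1:
  fixes M :: "'a measure" and X :: "nat \<Rightarrow> 'a \<Rightarrow> real" and \<sigma> :: real
    and F :: "(real \<Rightarrow> real) set" and nrm :: "(real \<Rightarrow> real) \<Rightarrow> real"
    and f :: "real \<Rightarrow> real"
  assumes "prob_space M"
    and rv: "\<And>n. X n \<in> borel_measurable M"
    and sigma_pos: "\<sigma> > 0"
    \<comment> \<open>F is a linear space of functions, closed under translations\<close>
    and F_zero: "(\<lambda>x. 0) \<in> F"
    and F_add: "\<And>g h. g \<in> F \<Longrightarrow> h \<in> F \<Longrightarrow> (\<lambda>x. g x + h x) \<in> F"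
    and F_scale: "\<And>g c. g \<in> F \<Longrightarrow> (\<lambda>x. c * g x) \<in> F"
    and F_transl: "\<And>g u. g \<in> F \<Longrightarrow> (\<lambda>x. g (x - u)) \<in> F"
    \<comment> \<open>nrm is a translation-invariant norm on F\<close>
    and nrm_nonneg: "\<And>g. g \<in> F \<Longrightarrow> nrm g \<ge> 0"
    and nrm_scale: "\<And>g c. g \<in> F \<Longrightarrow> nrm (\<lambda>x. c * g x) = \<bar>c\<bar> * nrm g"
    and nrm_triangle: "\<And>g h. g \<in> F \<Longrightarrow> h \<in> F \<Longrightarrow> nrm (\<lambda>x. g x + h x) \<le> nrm g + nrm h"
    and nrm_transl: "\<And>g u. g \<in> F \<Longrightarrow> nrm (\<lambda>x. g (x - u)) = nrm g"
    \<comment> \<open>weak global Edgeworth expansion of order 0, P_0 = 1, A = 0, uniform o-term\<close>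
    and edgeworth: "\<exists>\<epsilon> :: nat \<Rightarrow> real. \<epsilon> \<longlonglongrightarrow> 0 \<and>
        (\<forall>N\<ge>1. \<forall>g\<in>F.
          \<bar>(\<integral>\<omega>. g (psum X N \<omega>) \<partial>M) - (\<integral>z. ndens \<sigma> z * g (z * sqrt (real N)) \<partial>lborel)\<bar>
            \<le> nrm g * \<epsilon> N / sqrt (real N))"
    and fF: "f \<in> F"
    and f_int: "integrable lborel f"
    and xf_int: "integrable lborel (\<lambda>x. x * f x)"
  shows "\<forall>e>0. \<forall>\<^sub>F N in sequentially. \<forall>u::real.
           \<bar>sqrt (real N) * (\<integral>\<omega>. f (psum X N \<omega> - u) \<partial>M)
             - 1 / sqrt (2 * pi * \<sigma>\<^sup>2) * exp (- u\<^sup>2 / (2 * real N * \<sigma>\<^sup>2))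
               * (\<integral>x. f x \<partial>lborel)\<bar> < e"
proof -
  obtain \<epsilon> :: "nat \<Rightarrow> real" where eps: "\<epsilon> \<longlonglongrightarrow> 0" and ew: "\<And>N g. N \<ge> 1 \<Longrightarrow> g \<in> F \<Longrightarrow>
          \<bar>(\<integral>\<omega>. g (psum X N \<omega>) \<partial>M) - (\<integral>z. ndens \<sigma> z * g (z * sqrt (real N)) \<partial>lborel)\<bar>
            \<le> nrm g * \<epsilon> N / sqrt (real N)"
    using edgeworth by blast
  define c where "c = 1 / sqrt (2 * pi * \<sigma>\<^sup>2)"
  define L where "L = c / \<sigma>"
  define K where "K = (\<integral>x. \<bar>x * f x\<bar> \<partial>lborel)"
  define I where "I = (\<integral>x. f x \<partial>lborel)"
  have fmeas[measurable]: "f \<in> borel_measurable borel"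
    using borel_measurable_integrable[OF f_int] by simp
  have key: "\<bar>sqrt (real N) * (\<integral>\<omega>. f (psum X N \<omega> - u) \<partial>M)
             - c * exp (- u\<^sup>2 / (2 * real N * \<sigma>\<^sup>2)) * I\<bar>
        \<le> nrm f * \<bar>\<epsilon> N\<bar> + L * K / sqrt (real N)" if N1: "N \<ge> 1" for N u
  proof -
    define s where "s = sqrt (real N)"
    have s0: "s > 0" using N1 by (simp add: s_def)
    define g where "g = (\<lambda>x. f (x - u))"
    have gF: "g \<in> F" unfolding g_def using F_transl[OF fF] .
    have ng: "nrm g = nrm f" unfolding g_def using nrm_transl[OF fF] .
    define A where "A = (\<integral>z. ndens \<sigma> z * f (z * s - u) \<partial>lborel)"
    define E where "E = (\<integral>\<omega>. f (psum X N \<omega> - u) \<partial>M)"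
    have E1: "\<bar>E - A\<bar> \<le> nrm f * \<epsilon> N / s"
      using ew[OF N1 gF] unfolding ng unfolding E_def A_def g_def s_def .
    define h where "h = (\<lambda>x. ndens \<sigma> ((x + u) / s) * f x)"
    have hA: "(\<integral>x. h x \<partial>lborel) = s * A"
    proof -
      have "(\<integral>x. h x \<partial>lborel) = \<bar>s\<bar> *\<^sub>R (\<integral>x. h (-u + s * x) \<partial>lborel)"
        using s0 by (intro lborel_integral_real_affine) simp
      also have "(\<lambda>x. h (-u + s * x)) = (\<lambda>z. ndens \<sigma> z * f (z * s - u))"
        using s0 by (auto simp: h_def field_simps)
      finally show ?thesis using s0 by (simp add: A_def)
    qed
    define n0 where "n0 = ndens \<sigma> (u / s)"
    have n0e: "n0 = c * exp (- u\<^sup>2 / (2 * real N * \<sigma>\<^sup>2))"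
      using s0 N1 unfolding n0_def ndens_def c_def s_def by (simp add: power_divide)
    define D where "D = (\<lambda>x. (ndens \<sigma> ((x + u) / s) - n0) * f x)"
    have Db: "\<bar>D x\<bar> \<le> L / s * \<bar>x * f x\<bar>" for x
    proof -
      have "\<bar>D x\<bar> = \<bar>ndens \<sigma> ((x + u) / s) - ndens \<sigma> (u / s)\<bar> * \<bar>f x\<bar>"
        by (simp add: D_def n0_def abs_mult)
      also have "\<dots> \<le> (L * \<bar>(x + u) / s - u / s\<bar>) * \<bar>f x\<bar>"
        using ndens_lip[OF sigma_pos] unfolding L_def c_def by (intro mult_right_mono) auto
      also have "\<bar>(x + u) / s - u / s\<bar> = \<bar>x\<bar> / s" using s0 by (simp add: add_divide_distrib abs_divide)
      finally show ?thesis using s0 by (simp add: abs_mult)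
    qed
    have Dmeas[measurable]: "D \<in> borel_measurable borel"
      unfolding D_def ndens_def by measurable
    have xfa: "integrable lborel (\<lambda>x. L / s * \<bar>x * f x\<bar>)"
      using xf_int by (intro integrable_mult_right integrable_abs)
    have Dint: "integrable lborel D"
      by (rule Bochner_Integration.integrable_bound[OF xfa]) (use Db L_def c_def sigma_pos s0 in \<open>auto\<close>)
    have hD: "h = (\<lambda>x. D x + n0 * f x)"
      by (auto simp: h_def D_def n0_def algebra_simps)
    have hint: "(\<integral>x. h x \<partial>lborel) = (\<integral>x. D x \<partial>lborel) + n0 * I"
      unfolding hD I_def using Dint f_int by simp
    have Dle: "\<bar>\<integral>x. D x \<partial>lborel\<bar> \<le> L * K / s"
    proof -
      have "\<bar>\<integral>x. D x \<partial>lborel\<bar> \<le> (\<integral>x. \<bar>D x\<bar> \<partial>lborel)"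
        using integral_norm_bound[of lborel D] by simp
      also have "\<dots> \<le> (\<integral>x. L / s * \<bar>x * f x\<bar> \<partial>lborel)"
        using Dint xfa Db by (intro integral_mono) auto
      also have "\<dots> = L * K / s" by (simp add: K_def)
      finally show ?thesis .
    qed
    have eqS: "s * E - n0 * I = s * (E - A) + (\<integral>x. D x \<partial>lborel)"
      using hA hint by (simp add: algebra_simps)
    have "\<bar>s * E - n0 * I\<bar> \<le> s * \<bar>E - A\<bar> + L * K / s"
    proof -
      have "\<bar>s * (E - A)\<bar> = s * \<bar>E - A\<bar>" using s0 by (simp add: abs_mult)
      thus ?thesis using eqS Dle abs_triangle_ineq[of "s * (E - A)" "\<integral>x. D x \<partial>lborel"] by linarith
    qed
    also have "s * \<bar>E - A\<bar> \<le> nrm f * \<bar>\<epsilon> N\<bar>"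
    proof -
      have "s * \<bar>E - A\<bar> \<le> s * (nrm f * \<epsilon> N / s)"
        by (rule mult_left_mono[OF E1]) (use s0 in simp)
      also have "\<dots> = nrm f * \<epsilon> N" using s0 by simp
      also have "\<dots> \<le> nrm f * \<bar>\<epsilon> N\<bar>" using s0 nrm_nonneg[OF fF]
        by (simp add: mult_left_mono)
      finally show ?thesis .
    qed
    finally show ?thesis unfolding E_def n0e s_def by simp
  qed
  show ?thesis
  proof (intro allI impI)
    fix e :: real assume e: "e > 0"
    have nf: "nrm f \<ge> 0" using nrm_nonneg[OF fF] .
    have t1: "(\<lambda>N. nrm f * \<bar>\<epsilon> N\<bar>) \<longlonglongrightarrow> 0"
      using tendsto_mult[OF tendsto_const tendsto_rabs[OF eps], of "nrm f"] by simp
    have t2: "(\<lambda>N. L * K / sqrt (real N)) \<longlonglongrightarrow> 0"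
      by (intro tendsto_divide_0[OF tendsto_const] filterlim_at_top_imp_at_infinity filterlim_compose[OF sqrt_at_top filterlim_real_sequentially])
    have ev1: "\<forall>\<^sub>F N in sequentially. nrm f * \<bar>\<epsilon> N\<bar> < e / 2"
      using order_tendstoD(2)[OF t1, of "e / 2"] e by linarith
    have ev2: "\<forall>\<^sub>F N in sequentially. L * K / sqrt (real N) < e / 2"
      using order_tendstoD(2)[OF t2, of "e / 2"] e by linarith
    have ev3: "\<forall>\<^sub>F N in sequentially. N \<ge> (1::nat)"
      by (simp add: eventually_ge_at_top)
    show "\<forall>\<^sub>F N in sequentially. \<forall>u::real.
           \<bar>sqrt (real N) * (\<integral>\<omega>. f (psum X N \<omega> - u) \<partial>M)
             - 1 / sqrt (2 * pi * \<sigma>\<^sup>2) * exp (- u\<^sup>2 / (2 * real N * \<sigma>\<^sup>2))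
               * (\<integral>x. f x \<partial>lborel)\<bar> < e"
      using ev1 ev2 ev3
    proof eventually_elim
      case (elim N)
      show ?case
      proof
        fix u
        show "\<bar>sqrt (real N) * (\<integral>\<omega>. f (psum X N \<omega> - u) \<partial>M)
             - 1 / sqrt (2 * pi * \<sigma>\<^sup>2) * exp (- u\<^sup>2 / (2 * real N * \<sigma>\<^sup>2))
               * (\<integral>x. f x \<partial>lborel)\<bar> < e"
          using key[OF elim(3), of u] elim(1,2) unfolding c_def I_def by linarith
      qed
    qed
  qed
qed

end
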